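(* Let $f,g\in L^2(\mathbb{R})$ and write $V=V(f,g)=U+iW$ with $U,W$ real-valued. Assume that $V\in C^3(\mathbb{R}^2,\mathbb{R}^2)$, that $V(x_0,\omega_0)=0$, and that $\det J_V(x_0,\omega_0)\neq 0$, where \[ J_V(x_0,\omega_0)=\begin{pmatrix} U_x(x_0,\omega_0) & U_\omega(x_0,\omega_0)\\ W_x(x_0,\omega_0) & W_\omega(x_0,\omega_0)\end{pmatrix}. \] Let $\psi(x,\omega)=\arg V(x,\omega)$ denote a (local differentiable) phase of $V$. Then $\lim_{x\to x_0}\frac{\partial\psi}{\partial x}(x,\omega_0)=c$ for some real number $c\in\mathbb{R}$.
   Context: The short-time Fourier transform is $V(f,g)(x,\omega)=\int_{\mathbb{R}} f(t)\overline{g(t-x)}e^{-2\pi i\omega t}\,dt$, regarded as a map $\mathbb{R}^2\to\mathbb{R}^2\cong\mathbb{C}$; $C^k$ refers to real differentiability in $(x,\omega)$ and subscripts denote partial derivatives. At points where $V\neq 0$, a differentiable phase $\psi$ with $V=|V|e^{i\psi}$ exists locally, is unique up to an additive constant in $2\pi\mathbb{Z}$, and its partial derivative is $\frac{\partial\psi}{\partial x}=\frac{U W_x-W U_x}{U^2+W^2}$ (independent of the choice of phase). *)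

theory Defs
  imports "HOL-Analysis.Analysis"
begin

definition stft :: "(real \<Rightarrow> complex) \<Rightarrow> (real \<Rightarrow> complex) \<Rightarrow> real \<times> real \<Rightarrow> complex" where
  "stft f g z = (LINT t|lborel. f t * cnj (g (t - fst z)) * cis (- 2 * pi * snd z * t))"

definition L2 :: "(real \<Rightarrow> complex) \<Rightarrow> bool" where
  "L2 f \<longleftrightarrow> f \<in> borel_measurable lborel \<and> integrable lborel (\<lambda>t. (cmod (f t))\<^sup>2)"

definition px :: "(real \<times> real \<Rightarrow> complex) \<Rightarrow> real \<times> real \<Rightarrow> complex" where
  "px F z = vector_derivative (\<lambda>y. F (y, snd z)) (at (fst z))"

definition pw :: "(real \<times> real \<Rightarrow> complex) \<Rightarrow> real \<times> real \<Rightarrow> complex" where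
  "pw F z = vector_derivative (\<lambda>w. F (fst z, w)) (at (snd z))"

fun Ck :: "nat \<Rightarrow> (real \<times> real \<Rightarrow> complex) \<Rightarrow> bool" where
  "Ck 0 F \<longleftrightarrow> continuous_on UNIV F"
| "Ck (Suc k) F \<longleftrightarrow> continuous_on UNIV F
      \<and> (\<forall>z. (\<lambda>y. F (y, snd z)) differentiable (at (fst z)))
      \<and> (\<forall>z. (\<lambda>w. F (fst z, w)) differentiable (at (snd z)))
      \<and> Ck k (px F) \<and> Ck k (pw F)"

text \<open>x-derivative of the phase: (U W_x - W U_x)/(U^2 + W^2).\<close>
definition phase_dx :: "(real \<times> real \<Rightarrow> complex) \<Rightarrow> real \<times> real \<Rightarrow> real" where
  "phase_dx F z = (Re (F z) * Im (px F z) - Im (F z) * Re (px F z)) / ((Re (F z))\<^sup>2 + (Im (F z))\<^sup>2)"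

end

theory Submission
  imports Defs
begin

lemma aux_lims:
  fixes f f1 f2 :: "real \<Rightarrow> real" and x0 :: real
  assumes d: "\<And>y. (f has_real_derivative f1 y) (at y)"
    and d1: "\<And>y. (f1 has_real_derivative f2 y) (at y)"
    and c2: "isCont f2 x0" and z: "f x0 = 0"
  shows "((\<lambda>x. f x / (x - x0)) \<longlongrightarrow> f1 x0) (at x0)"
    and "((\<lambda>x. (f1 x * (x - x0) - f x) / (x - x0)^2) \<longlongrightarrow> f2 x0 / 2) (at x0)"
proof -
  have ne: "eventually (\<lambda>x. x \<noteq> x0) (at x0)"
    by (simp add: eventually_at_filter)
  have cf: "isCont f x" for x using d by (rule DERIV_isCont)
  have cf1: "isCont f1 x" for x using d1 by (rule DERIV_isCont)
  have f0: "(f \<longlongrightarrow> 0) (at x0)" using cf[of x0] z by (metis isCont_def)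
  have f10: "(f1 \<longlongrightarrow> f1 x0) (at x0)" using cf1[of x0] by (simp add: isCont_def)
  show "((\<lambda>x. f x / (x - x0)) \<longlongrightarrow> f1 x0) (at x0)"
  proof (rule lhopital[where f'=f1 and g'="\<lambda>_. 1"])
    show "((\<lambda>x. x - x0) \<longlongrightarrow> 0) (at x0)"
      by (auto intro!: tendsto_eq_intros)
    show "eventually (\<lambda>x. x - x0 \<noteq> 0) (at x0)" using ne by simp
    show "eventually (\<lambda>x. DERIV f x :> f1 x) (at x0)" using d by simp
    show "eventually (\<lambda>x. DERIV (\<lambda>x. x - x0) x :> 1) (at x0)"
      by (intro always_eventually allI) (auto intro!: derivative_eq_intros)
    show "((\<lambda>x. f1 x / 1) \<longlongrightarrow> f1 x0) (at x0)" using f10 by simp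
  qed (use f0 in auto)
  show "((\<lambda>x. (f1 x * (x - x0) - f x) / (x - x0)^2) \<longlongrightarrow> f2 x0 / 2) (at x0)"
  proof (rule lhopital[where f'="\<lambda>x. f2 x * (x - x0)" and g'="\<lambda>x. 2 * (x - x0)"])
    have "((\<lambda>x. f1 x * (x - x0) - f x) \<longlongrightarrow> f1 x0 * (x0 - x0) - 0) (at x0)"
      by (intro tendsto_intros f10 f0)
    then show "((\<lambda>x. f1 x * (x - x0) - f x) \<longlongrightarrow> 0) (at x0)" by simp
    have "((\<lambda>x. (x - x0)^2) \<longlongrightarrow> (x0 - x0)^2) (at x0)"
      by (intro tendsto_intros)
    then show "((\<lambda>x. (x - x0)^2) \<longlongrightarrow> 0) (at x0)" by simp
    show "eventually (\<lambda>x. (x - x0)^2 \<noteq> 0) (at x0)" using ne by simp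
    show "eventually (\<lambda>x. 2 * (x - x0) \<noteq> 0) (at x0)" using ne by simp
    show "eventually (\<lambda>x. DERIV (\<lambda>x. f1 x * (x - x0) - f x) x :> f2 x * (x - x0)) (at x0)"
    proof (rule always_eventually, rule allI)
      fix x
      show "DERIV (\<lambda>x. f1 x * (x - x0) - f x) x :> f2 x * (x - x0)"
        by (auto intro!: derivative_eq_intros d d1)
    qed
    show "eventually (\<lambda>x. DERIV (\<lambda>x. (x - x0)^2) x :> 2 * (x - x0)) (at x0)"
      by (intro always_eventually allI) (auto intro!: derivative_eq_intros)
    have "((\<lambda>x. f2 x / 2) \<longlongrightarrow> f2 x0 / 2) (at x0)"
      using c2 by (intro tendsto_intros) (simp_all add: isCont_def)
    then show "((\<lambda>x. f2 x * (x - x0) / (2 * (x - x0))) \<longlongrightarrow> f2 x0 / 2) (at x0)"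
      by (rule tendsto_cong[THEN iffD1, rotated]) (use ne in \<open>auto elim!: eventually_mono simp: field_simps\<close>)
  qed
qed

lemma key:
  fixes r r1 r2 i i1 i2 :: "real \<Rightarrow> real" and x0 :: real
  assumes dr: "\<And>y. (r has_real_derivative r1 y) (at y)"
    and dr1: "\<And>y. (r1 has_real_derivative r2 y) (at y)"
    and cr: "isCont r2 x0" and zr: "r x0 = 0"
    and di: "\<And>y. (i has_real_derivative i1 y) (at y)"
    and di1: "\<And>y. (i1 has_real_derivative i2 y) (at y)"
    and ci: "isCont i2 x0" and zi: "i x0 = 0"
    and nz: "r1 x0 \<noteq> 0 \<or> i1 x0 \<noteq> 0"
  shows "\<exists>c. ((\<lambda>x. (r x * i1 x - i x * r1 x) / ((r x)^2 + (i x)^2)) \<longlongrightarrow> c) (at x0)"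
proof -
  note A = aux_lims[OF dr dr1 cr zr]
  note B = aux_lims[OF di di1 ci zi]
  define p1 where "p1 x = r x / (x - x0)" for x
  define p2 where "p2 x = i x / (x - x0)" for x
  define q1 where "q1 x = (r1 x * (x - x0) - r x) / (x - x0)^2" for x
  define q2 where "q2 x = (i1 x * (x - x0) - i x) / (x - x0)^2" for x
  have den: "(r1 x0)^2 + (i1 x0)^2 \<noteq> 0" using nz by (simp add: add_nonneg_eq_0_iff)
  have lim: "((\<lambda>x. (p1 x * q2 x - p2 x * q1 x) / ((p1 x)^2 + (p2 x)^2)) \<longlongrightarrow>
     (r1 x0 * (i2 x0 / 2) - i1 x0 * (r2 x0 / 2)) / ((r1 x0)^2 + (i1 x0)^2)) (at x0)"
    unfolding p1_def p2_def q1_def q2_def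
    by (intro tendsto_intros A B den)
  have ne: "eventually (\<lambda>x. x \<noteq> x0) (at x0)"
    by (simp add: eventually_at_filter)
  have eq: "(p1 x * q2 x - p2 x * q1 x) / ((p1 x)^2 + (p2 x)^2)
      = (r x * i1 x - i x * r1 x) / ((r x)^2 + (i x)^2)" if "x \<noteq> x0" for x
  proof -
    define t where "t = x - x0"
    have t: "t \<noteq> 0" using that by (simp add: t_def)
    have n: "p1 x * q2 x - p2 x * q1 x = (r x * i1 x - i x * r1 x) / t^2"
      unfolding p1_def p2_def q1_def q2_def t_def[symmetric] using t
      by (simp add: field_simps power2_eq_square)
    have dd: "(p1 x)^2 + (p2 x)^2 = ((r x)^2 + (i x)^2) / t^2"
      unfolding p1_def p2_def t_def[symmetric] using t
      by (simp add: field_simps power2_eq_square)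
    have g: "(A / c) / (B / c) = A / B" if "c \<noteq> 0" for A B c :: real
      using that by (metis divide_divide_eq_left' divide_divide_eq_right nonzero_mult_div_cancel_left mult.commute divide_divide_times_eq)
    show ?thesis unfolding n dd using t by (intro g) simp
  qed
  show ?thesis
    using lim by (intro exI) (rule tendsto_cong[THEN iffD1, rotated], use ne eq in \<open>auto elim!: eventually_mono\<close>)
qed


theorem mainTheorem6:
  fixes f g :: "real \<Rightarrow> complex" and x0 \<omega>0 :: real
  assumes "L2 f" and "L2 g"
    and "Ck 3 (stft f g)"
    and "stft f g (x0, \<omega>0) = 0"
    and "Re (px (stft f g) (x0, \<omega>0)) * Im (pw (stft f g) (x0, \<omega>0))
         - Re (pw (stft f g) (x0, \<omega>0)) * Im (px (stft f g) (x0, \<omega>0)) \<noteq> 0"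
  shows "\<exists>c::real. ((\<lambda>x. phase_dx (stft f g) (x, \<omega>0)) \<longlongrightarrow> c) (at x0)"
proof -
  define F where "F = stft f g"
  have C: "Ck (Suc (Suc (Suc 0))) F" using assms(3) by (simp add: F_def numeral_3_eq_3)
  have dF: "\<And>y. (\<lambda>y. F (y, \<omega>0)) differentiable (at y)"
    using C by simp
  have dF1: "\<And>y. (\<lambda>y. px F (y, \<omega>0)) differentiable (at y)"
    using C by simp
  have cF2: "continuous_on UNIV (px (px F))" using C by simp
  have vF: "((\<lambda>y. F (y, \<omega>0)) has_vector_derivative px F (y, \<omega>0)) (at y)" for y
    using dF[of y] unfolding px_def by (simp add: vector_derivative_works)
  have vF1: "((\<lambda>y. px F (y, \<omega>0)) has_vector_derivative px (px F) (y, \<omega>0)) (at y)" for y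
    using dF1[of y] unfolding px_def[of "px F"] by (simp add: vector_derivative_works)
  have c2: "continuous_on UNIV (\<lambda>y. px (px F) (y, \<omega>0))"
    by (rule continuous_on_compose2[OF cF2]) (auto intro!: continuous_intros)
  have c2r: "isCont (\<lambda>y. Re (px (px F) (y, \<omega>0))) x0"
    using c2 by (auto intro!: continuous_intros simp: continuous_on_eq_continuous_at)
  have c2i: "isCont (\<lambda>y. Im (px (px F) (y, \<omega>0))) x0"
    using c2 by (auto intro!: continuous_intros simp: continuous_on_eq_continuous_at)
  have z: "F (x0, \<omega>0) = 0" using assms(4) by (simp add: F_def)
  have nz: "Re (px F (x0, \<omega>0)) \<noteq> 0 \<or> Im (px F (x0, \<omega>0)) \<noteq> 0"
    using assms(5) by (auto simp: F_def)
  have "\<exists>c. ((\<lambda>x. (Re (F (x, \<omega>0)) * Im (px F (x, \<omega>0)) - Im (F (x, \<omega>0)) * Re (px F (x, \<omega>0)))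
      / ((Re (F (x, \<omega>0)))^2 + (Im (F (x, \<omega>0)))^2)) \<longlongrightarrow> c) (at x0)"
    by (rule key[OF has_field_derivative_Re[OF vF] has_field_derivative_Re[OF vF1] c2r _
                    has_field_derivative_Im[OF vF] has_field_derivative_Im[OF vF1] c2i _ nz])
       (simp_all add: z)
  then show ?thesis unfolding phase_dx_def F_def .
qed

end
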